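(* Let $\Gamma$ be a connected drawing. Then $2|E_0| \ge N(U_5)+N(U_6)$.
   Context: Drawings are on the sphere: vertices are distinct points, edges (of a graph possibly with parallel edges, no loops) are Jordan arcs; any two edges share finitely many points, each a common endpoint or a proper crossing; no three edges cross at one point; no edge crosses itself; adjacent edges do not cross. $E_0$ is the set of uncrossed edges. An edge with $i$ crossings is split into $i+1$ edge-segments; an edge-segment is inner if both its endpoints are crossings and outer otherwise. The planarization replaces each crossing by a degree-$4$ vertex; the drawing is connected if its planarization is connected. Cells are the components of the sphere minus all vertices and edges; the boundary of a cell is a cyclic sequence alternating between edge-segments and vertices/crossings. Cell types: $U_5$: boundary $u$, uncrossed edge $uv$, $v$, outer segment, crossing, outer segment (two vertices $u,v$). $U_6$: boundary $u$, uncrossed edge $uv$, $v$, outer segment, crossing, inner segment, crossing, outer segment. $N(T)$ is the number of cells of type $T$. *)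

theory Defs
  imports "HOL-Analysis.Analysis"
begin

text \<open>Drawings on the unit sphere S^2 in R^3. Vertices: a finite set V of points;
  edges: a finite index set E, edge e drawn as the arc (injective path) g e.\<close>

definition S2 :: "(real^3) set" where
  "S2 = sphere 0 1"

definition edge_set :: "('e \<Rightarrow> real \<Rightarrow> real^3) \<Rightarrow> 'e \<Rightarrow> (real^3) set" where
  "edge_set g e = path_image (g e)"

definition endpoints :: "('e \<Rightarrow> real \<Rightarrow> real^3) \<Rightarrow> 'e \<Rightarrow> (real^3) set" where
  "endpoints g e = {pathstart (g e), pathfinish (g e)}"

definition proper_crossing :: "(real^3) set \<Rightarrow> (real^3) set \<Rightarrow> real^3 \<Rightarrow> bool" where
  "proper_crossing A B x \<longleftrightarrow>
     (\<exists>U h k. openin (top_of_set S2) U \<and> x \<in> U \<and>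
        homeomorphism U (ball (0::complex) 1) h k \<and> h x = 0 \<and>
        h ` (A \<inter> U) = {z \<in> ball 0 1. Im z = 0} \<and>
        h ` (B \<inter> U) = {z \<in> ball 0 1. Re z = 0})"

definition drawing :: "(real^3) set \<Rightarrow> 'e set \<Rightarrow> ('e \<Rightarrow> real \<Rightarrow> real^3) \<Rightarrow> bool" where
  "drawing V E g \<longleftrightarrow>
     finite V \<and> finite E \<and> V \<subseteq> S2 \<and>
     (\<forall>e\<in>E. arc (g e) \<and> edge_set g e \<subseteq> S2 \<and> endpoints g e \<subseteq> V \<and>
              edge_set g e \<inter> V = endpoints g e) \<and>
     (\<forall>e1\<in>E. \<forall>e2\<in>E. e1 \<noteq> e2 \<longrightarrow>
        finite (edge_set g e1 \<inter> edge_set g e2) \<and>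
        (\<forall>x\<in>edge_set g e1 \<inter> edge_set g e2.
            x \<in> endpoints g e1 \<inter> endpoints g e2 \<or>
            proper_crossing (edge_set g e1) (edge_set g e2) x)) \<and>
     (\<forall>x. x \<notin> V \<longrightarrow> card {e\<in>E. x \<in> edge_set g e} \<le> 2) \<and>
     (\<forall>e1\<in>E. \<forall>e2\<in>E. e1 \<noteq> e2 \<and> endpoints g e1 \<inter> endpoints g e2 \<noteq> {} \<longrightarrow>
        edge_set g e1 \<inter> edge_set g e2 \<subseteq> endpoints g e1 \<inter> endpoints g e2)"

text \<open>Connected drawing: the planarization is connected, i.e. the union of all vertices and
  edges is a connected set.\<close>
definition drawing_points :: "(real^3) set \<Rightarrow> 'e set \<Rightarrow> ('e \<Rightarrow> real \<Rightarrow> real^3) \<Rightarrow> (real^3) set" where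
  "drawing_points V E g = V \<union> (\<Union>e\<in>E. edge_set g e)"

definition connected_drawing :: "(real^3) set \<Rightarrow> 'e set \<Rightarrow> ('e \<Rightarrow> real \<Rightarrow> real^3) \<Rightarrow> bool" where
  "connected_drawing V E g \<longleftrightarrow> drawing V E g \<and> connected (drawing_points V E g)"

definition crossings :: "(real^3) set \<Rightarrow> 'e set \<Rightarrow> ('e \<Rightarrow> real \<Rightarrow> real^3) \<Rightarrow> (real^3) set" where
  "crossings V E g = {x. x \<notin> V \<and> (\<exists>e1\<in>E. \<exists>e2\<in>E. e1 \<noteq> e2 \<and> x \<in> edge_set g e1 \<and> x \<in> edge_set g e2)}"

definition uncrossed_edges :: "(real^3) set \<Rightarrow> 'e set \<Rightarrow> ('e \<Rightarrow> real \<Rightarrow> real^3) \<Rightarrow> 'e set" where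
  "uncrossed_edges V E g = {e\<in>E. edge_set g e \<inter> crossings V E g = {}}"

definition edge_segment ::
  "(real^3) set \<Rightarrow> 'e set \<Rightarrow> ('e \<Rightarrow> real \<Rightarrow> real^3) \<Rightarrow> 'e \<Rightarrow> real^3 \<Rightarrow> real^3 \<Rightarrow> (real^3) set \<Rightarrow> bool" where
  "edge_segment V E g e p q A \<longleftrightarrow> e \<in> E \<and>
     (\<exists>s t. 0 \<le> s \<and> s < t \<and> t \<le> 1 \<and> {g e s, g e t} = {p, q} \<and> A = g e ` {s..t} \<and>
            (\<forall>r. s < r \<and> r < t \<longrightarrow> g e r \<notin> crossings V E g))"

definition cells :: "(real^3) set \<Rightarrow> 'e set \<Rightarrow> ('e \<Rightarrow> real \<Rightarrow> real^3) \<Rightarrow> (real^3) set set" where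
  "cells V E g = components (S2 - drawing_points V E g)"

definition cell_boundary :: "(real^3) set \<Rightarrow> (real^3) set" where
  "cell_boundary c = closure c - c"

definition is_U5 :: "(real^3) set \<Rightarrow> 'e set \<Rightarrow> ('e \<Rightarrow> real \<Rightarrow> real^3) \<Rightarrow> (real^3) set \<Rightarrow> bool" where
  "is_U5 V E g c \<longleftrightarrow>
     (\<exists>u v e x e1 e2 A1 A2. u \<in> V \<and> v \<in> V \<and> e \<in> uncrossed_edges V E g \<and> endpoints g e = {u, v} \<and>
        x \<in> crossings V E g \<and>
        edge_segment V E g e1 v x A1 \<and> edge_segment V E g e2 x u A2 \<and>
        cell_boundary c = edge_set g e \<union> A1 \<union> A2)"

definition is_U6 :: "(real^3) set \<Rightarrow> 'e set \<Rightarrow> ('e \<Rightarrow> real \<Rightarrow> real^3) \<Rightarrow> (real^3) set \<Rightarrow> bool" where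
  "is_U6 V E g c \<longleftrightarrow>
     (\<exists>u v e x1 x2 e1 e2 e3 A1 A2 A3. u \<in> V \<and> v \<in> V \<and> e \<in> uncrossed_edges V E g \<and>
        endpoints g e = {u, v} \<and>
        x1 \<in> crossings V E g \<and> x2 \<in> crossings V E g \<and>
        edge_segment V E g e1 v x1 A1 \<and> edge_segment V E g e2 x1 x2 A2 \<and>
        edge_segment V E g e3 x2 u A3 \<and>
        cell_boundary c = edge_set g e \<union> A1 \<union> A2 \<union> A3)"

end

theory Submission imports Defs "HOL-Complex_Analysis.Winding_Numbers" begin

lemma frame_exists:
  fixes q :: "real^3"
  assumes "norm q = 1"
  obtains a b where "norm a = 1" "norm b = 1" "a \<bullet> b = 0" "a \<bullet> q = 0" "b \<bullet> q = 0"
    "\<And>y. y = (y \<bullet> a) *\<^sub>R a + (y \<bullet> b) *\<^sub>R b + (y \<bullet> q) *\<^sub>R q"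
proof -
  let ?S = "{x. q \<bullet> x = 0}"
  have q0: "q \<noteq> 0" using assms by auto
  have sub: "subspace ?S" by (rule subspace_hyperplane)
  obtain B where B: "B \<subseteq> ?S" "pairwise orthogonal B" "\<And>x. x \<in> B \<Longrightarrow> norm x = 1"
      "independent B" "card B = dim ?S" "span B = ?S"
    using orthonormal_basis_subspace[OF sub] by metis
  have "dim ?S = 2" using dim_hyperplane[OF q0] by simp
  then obtain a b where ab: "B = {a, b}" "a \<noteq> b" using B(5) card_2_iff by metis
  have na: "norm a = 1" and nb: "norm b = 1" using B(3) ab by auto
  have abo: "a \<bullet> b = 0" using B(2) ab unfolding pairwise_def orthogonal_def by auto
  have aq: "a \<bullet> q = 0" "b \<bullet> q = 0" using B(1) ab by (auto simp: inner_commute)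
  have dec: "y = (y \<bullet> a) *\<^sub>R a + (y \<bullet> b) *\<^sub>R b + (y \<bullet> q) *\<^sub>R q" for y
  proof -
    have qq: "q \<bullet> q = 1" using assms by (simp add: dot_square_norm)
    have aa: "a \<bullet> a = 1" using na by (simp add: dot_square_norm)
    have bb: "b \<bullet> b = 1" using nb by (simp add: dot_square_norm)
    define w where "w = y - ((y \<bullet> a) *\<^sub>R a + (y \<bullet> b) *\<^sub>R b + (y \<bullet> q) *\<^sub>R q)"
    have wq: "q \<bullet> w = 0" using aq qq abo by (simp add: w_def inner_diff_right inner_add_right inner_commute)
    have wa: "a \<bullet> w = 0" using aq aa abo by (simp add: w_def inner_diff_right inner_add_right inner_commute)
    have wb: "b \<bullet> w = 0" using aq bb abo by (simp add: w_def inner_diff_right inner_add_right inner_commute)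
    have "w \<in> span {a, b}" using wq B(6) ab by auto
    then obtain u v where uv: "w = u *\<^sub>R a + v *\<^sub>R b"
      unfolding span_insert span_singleton by (auto simp: scaleR_conv_of_real) (metis add.commute diff_add_cancel)
    have "u = 0" using wa uv aa abo by (simp add: inner_add_right inner_commute)
    moreover have "v = 0" using wb uv bb abo by (simp add: inner_add_right inner_commute)
    ultimately have "w = 0" using uv by simp
    then show ?thesis by (simp add: w_def)
  qed
  show ?thesis using that na nb abo aq dec by blast
qed

locale sframe =
  fixes q a b :: "real^3"
  assumes nq: "norm q = 1" and na: "norm a = 1" and nb: "norm b = 1"
    and ab: "a \<bullet> b = 0" and aq: "a \<bullet> q = 0" and bq: "b \<bullet> q = 0"
    and dec: "\<And>y. y = (y \<bullet> a) *\<^sub>R a + (y \<bullet> b) *\<^sub>R b + (y \<bullet> q) *\<^sub>R q"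
begin

definition st :: "real^3 \<Rightarrow> complex" where
  "st y = Complex ((y \<bullet> a) / (1 - y \<bullet> q)) ((y \<bullet> b) / (1 - y \<bullet> q))"

definition ist :: "complex \<Rightarrow> real^3" where
  "ist z = inverse ((cmod z)\<^sup>2 + 1) *\<^sub>R (2 *\<^sub>R (Re z *\<^sub>R a + Im z *\<^sub>R b) + ((cmod z)\<^sup>2 - 1) *\<^sub>R q)"

lemma qq: "q \<bullet> q = 1" and aa: "a \<bullet> a = 1" and bb: "b \<bullet> b = 1"
  using nq na nb by (simp_all add: dot_square_norm)

lemma inner_dec: "y \<bullet> y = (y \<bullet> a)\<^sup>2 + (y \<bullet> b)\<^sup>2 + (y \<bullet> q)\<^sup>2"
proof -
  have "y \<bullet> y = y \<bullet> ((y \<bullet> a) *\<^sub>R a + (y \<bullet> b) *\<^sub>R b + (y \<bullet> q) *\<^sub>R q)"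
    by (rule arg_cong[OF dec[of y]])
  also have "\<dots> = (y \<bullet> a)\<^sup>2 + (y \<bullet> b)\<^sup>2 + (y \<bullet> q)\<^sup>2"
    by (simp add: inner_add_right power2_eq_square)
  finally show ?thesis .
qed

lemma S2_norm: "y \<in> S2 \<longleftrightarrow> norm y = 1"
  by (simp add: S2_def)

lemma dist_q_sq:
  assumes "norm y = 1" shows "(dist y q)\<^sup>2 = 2 - 2 * (y \<bullet> q)"
proof -
  have yy: "y \<bullet> y = 1" using assms by (simp add: dot_square_norm)
  have "(dist y q)\<^sup>2 = (y - q) \<bullet> (y - q)" by (simp add: dist_norm power2_norm_eq_inner)
  also have "\<dots> = y \<bullet> y - 2 * (y \<bullet> q) + q \<bullet> q" by (simp add: inner_diff_left inner_diff_right inner_commute)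
  finally show ?thesis using yy qq by simp
qed

lemma lt1: "norm y = 1 \<Longrightarrow> y \<noteq> q \<Longrightarrow> y \<bullet> q < 1"
proof -
  assume "norm y = 1" "y \<noteq> q"
  then have "(dist y q)\<^sup>2 > 0" by simp
  with dist_q_sq[OF \<open>norm y = 1\<close>] show ?thesis by simp
qed

lemma cmod_sq: "(cmod z)\<^sup>2 = (Re z)\<^sup>2 + (Im z)\<^sup>2"
  by (simp add: cmod_def)

lemma pos_r: "(cmod z)\<^sup>2 + 1 > 0"
  by (smt (verit) zero_le_power2)

lemma ist_inner: "ist z \<bullet> w = inverse ((cmod z)\<^sup>2 + 1) * (2 * (Re z * (a \<bullet> w) + Im z * (b \<bullet> w)) + ((cmod z)\<^sup>2 - 1) * (q \<bullet> w))"
  by (simp only: ist_def inner_scaleR_left inner_add_left)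

lemma ist_a: "ist z \<bullet> a = 2 * Re z / ((cmod z)\<^sup>2 + 1)"
  and ist_b: "ist z \<bullet> b = 2 * Im z / ((cmod z)\<^sup>2 + 1)"
  and ist_q: "ist z \<bullet> q = ((cmod z)\<^sup>2 - 1) / ((cmod z)\<^sup>2 + 1)"
proof -
  have f: "a \<bullet> a = 1" "b \<bullet> a = 0" "q \<bullet> a = 0" "a \<bullet> b = 0" "b \<bullet> b = 1" "q \<bullet> b = 0"
    "a \<bullet> q = 0" "b \<bullet> q = 0" "q \<bullet> q = 1"
    using aa bb qq ab aq bq by (simp_all add: inner_commute)
  show "ist z \<bullet> a = 2 * Re z / ((cmod z)\<^sup>2 + 1)" unfolding ist_inner f by (simp add: divide_inverse)
  show "ist z \<bullet> b = 2 * Im z / ((cmod z)\<^sup>2 + 1)" unfolding ist_inner f by (simp add: divide_inverse)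
  show "ist z \<bullet> q = ((cmod z)\<^sup>2 - 1) / ((cmod z)\<^sup>2 + 1)" unfolding ist_inner f by (simp add: divide_inverse)
qed

lemma norm_ist: "norm (ist z) = 1"
proof -
  have pos: "(cmod z)\<^sup>2 + 1 > 0" by (rule pos_r)
  have "ist z \<bullet> ist z = 1"
    unfolding inner_dec[of "ist z"] ist_a ist_b ist_q using pos
    by (simp add: divide_simps cmod_sq) (simp add: algebra_simps power2_eq_square)
  then show ?thesis by (metis norm_eq_sqrt_inner real_sqrt_one)
qed

lemma ist_q_lt: "ist z \<bullet> q < 1"
proof -
  have pos: "(cmod z)\<^sup>2 + 1 > 0" by (rule pos_r)
  then show ?thesis unfolding ist_q by (simp add: divide_simps)
qed

lemma ist_ne: "ist z \<noteq> q"
  by (metis ist_q_lt qq less_irrefl)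

lemma ist_S2: "ist z \<in> S2 - {q}"
  using norm_ist ist_ne S2_norm by auto

lemma st_ist: "st (ist z) = z"
proof -
  have pos: "(cmod z)\<^sup>2 + 1 > 0" by (rule pos_r)
  have d: "1 - ist z \<bullet> q = 2 / ((cmod z)\<^sup>2 + 1)"
    unfolding ist_q using pos by (simp add: divide_simps)
  show ?thesis unfolding st_def d ist_a ist_b using pos
    by (simp add: complex_eq_iff)
qed

lemma ist_st:
  assumes "y \<in> S2 - {q}" shows "ist (st y) = y"
proof -
  have ny: "norm y = 1" and yq: "y \<noteq> q" using assms S2_norm by auto
  define d where "d = 1 - y \<bullet> q"
  have dpos: "d > 0" using lt1[OF ny yq] by (simp add: d_def)
  have yy: "(y \<bullet> a)\<^sup>2 + (y \<bullet> b)\<^sup>2 + (y \<bullet> q)\<^sup>2 = 1"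
    using inner_dec[of y] ny by (simp add: dot_square_norm)
  have r: "(cmod (st y))\<^sup>2 = (1 + y \<bullet> q) / d"
  proof -
    have "(cmod (st y))\<^sup>2 = ((y \<bullet> a)\<^sup>2 + (y \<bullet> b)\<^sup>2) / d\<^sup>2"
      by (simp add: cmod_sq st_def d_def[symmetric] power_divide add_divide_distrib)
    also have "\<dots> = (1 - (y \<bullet> q)\<^sup>2) / d\<^sup>2" using yy by (simp add: algebra_simps)
    also have "\<dots> = (1 + y \<bullet> q) / d" using dpos
      by (simp add: d_def power2_eq_square divide_simps) (simp add: algebra_simps)
    finally show ?thesis .
  qed
  have r1: "inverse ((cmod (st y))\<^sup>2 + 1) = d / 2"
    unfolding r using dpos by (simp add: d_def field_simps)
  have r2: "(cmod (st y))\<^sup>2 - 1 = 2 * (y \<bullet> q) / d"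
    unfolding r using dpos by (simp add: d_def field_simps)
  have "ist (st y) = (d / 2) *\<^sub>R (2 *\<^sub>R ((y \<bullet> a / d) *\<^sub>R a + (y \<bullet> b / d) *\<^sub>R b) + (2 * (y \<bullet> q) / d) *\<^sub>R q)"
    unfolding ist_def r1 r2 by (simp add: st_def d_def)
  also have "\<dots> = (y \<bullet> a) *\<^sub>R a + (y \<bullet> b) *\<^sub>R b + (y \<bullet> q) *\<^sub>R q"
    using dpos by (simp add: scaleR_add_right)
  also have "\<dots> = y" by (rule dec[symmetric])
  finally show ?thesis .
qed

lemma dist_ist_sq: "(dist (ist z) q)\<^sup>2 = 4 / ((cmod z)\<^sup>2 + 1)"
proof -
  have pos: "(cmod z)\<^sup>2 + 1 > 0" by (rule pos_r)
  show ?thesis unfolding dist_q_sq[OF norm_ist] ist_q using pos by (simp add: divide_simps)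
qed

lemma continuous_ist: "continuous_on UNIV ist"
  unfolding ist_def
  by (intro continuous_intros) (metis less_irrefl pos_r)

lemma continuous_st: "continuous_on (S2 - {q}) st"
proof -
  have "continuous_on (S2 - {q}) (\<lambda>y. Complex ((y \<bullet> a) / (1 - y \<bullet> q)) ((y \<bullet> b) / (1 - y \<bullet> q)))"
    by (intro continuous_intros; use lt1 S2_norm in fastforce)
  then show ?thesis by (simp add: st_def[abs_def])
qed

lemma homeo: "homeomorphism (S2 - {q}) UNIV st ist"
  unfolding homeomorphism_def
proof (intro conjI ballI continuous_st continuous_ist)
  show "st ` (S2 - {q}) = UNIV"
    by (metis UNIV_eq_I image_eqI st_ist ist_S2)
  show "ist ` UNIV = S2 - {q}"
  proof
    show "ist ` UNIV \<subseteq> S2 - {q}" using ist_S2 by auto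
    show "S2 - {q} \<subseteq> ist ` UNIV"
    proof
      fix x assume "x \<in> S2 - {q}"
      then have "x = ist (st x)" by (simp add: ist_st)
      then show "x \<in> ist ` UNIV" by blast
    qed
  qed
qed (auto simp: ist_st st_ist)


lemma inj_st: "inj_on st (S2 - {q})"
  by (metis inj_onI ist_st)

lemma st_loop:
  assumes sp: "simple_path \<gamma>" and Jsub: "path_image \<gamma> \<subseteq> S2 - {q}"
  shows "simple_path (st \<circ> \<gamma>)" "path_image (st \<circ> \<gamma>) = st ` path_image \<gamma>"
proof -
  show "simple_path (st \<circ> \<gamma>)"
    by (rule simple_path_continuous_image[OF sp])
       (use continuous_on_subset[OF continuous_st Jsub] inj_on_subset[OF inj_st Jsub] in auto)
  show "path_image (st \<circ> \<gamma>) = st ` path_image \<gamma>" by (simp add: path_image_compose)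
qed

lemma sj:
  assumes sp: "simple_path \<gamma>" and cl: "pathfinish \<gamma> = pathstart \<gamma>"
    and Jsub: "path_image \<gamma> \<subseteq> S2 - {q}"
    and y: "y \<in> S2 - path_image \<gamma> - {q}"
  shows "y \<in> connected_component_set (S2 - path_image \<gamma>) q \<longleftrightarrow>
         st y \<in> outside (path_image (st \<circ> \<gamma>))"
proof -
  define J where "J = path_image \<gamma>"
  define \<Gamma> where "\<Gamma> = path_image (st \<circ> \<gamma>)"
  have spG: "simple_path (st \<circ> \<gamma>)" and GJ: "\<Gamma> = st ` J"
    using st_loop[OF sp Jsub] by (auto simp: \<Gamma>_def J_def)
  have clG: "pathfinish (st \<circ> \<gamma>) = pathstart (st \<circ> \<gamma>)"
    using cl by (simp add: pathfinish_compose pathstart_compose)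
  note JIO = Jordan_inside_outside[OF spG clG, folded \<Gamma>_def]
  have JS: "J \<subseteq> S2 - {q}" using Jsub by (simp add: J_def)
  have cG: "compact \<Gamma>" unfolding \<Gamma>_def by (simp add: compact_simple_path_image spG)
  have qin: "q \<in> S2 - J" using JS nq S2_norm by auto
  have stJ: "x \<in> S2 - {q} \<Longrightarrow> st x \<in> \<Gamma> \<longleftrightarrow> x \<in> J" for x
    using GJ JS inj_st by (auto dest: inj_onD)
  have ist_notJ: "z \<notin> \<Gamma> \<Longrightarrow> ist z \<notin> J" for z
    using GJ st_ist by (metis image_eqI)
  have yS: "y \<in> S2 - {q}" and yJ: "y \<notin> J" using y by (auto simp: J_def)
  show ?thesis
  proof
    assume yC: "y \<in> connected_component_set (S2 - path_image \<gamma>) q"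
    show "st y \<in> outside (path_image (st \<circ> \<gamma>))"
    proof (rule ccontr)
      assume no: "st y \<notin> outside (path_image (st \<circ> \<gamma>))"
      have "st y \<notin> \<Gamma>" using stJ[OF yS] yJ by simp
      then have yin: "st y \<in> inside \<Gamma>" using no inside_Un_outside[of \<Gamma>] unfolding \<Gamma>_def by blast
      define C where "C = connected_component_set (S2 - J) q"
      define I where "I = ist ` inside \<Gamma>"
      have conC: "connected C" by (simp add: C_def connected_connected_component)
      have CS: "C \<subseteq> S2 - J" by (simp add: C_def connected_component_subset)
      have qC: "q \<in> C" using qin by (simp add: C_def)
      have yI: "y \<in> I" unfolding I_def using yin ist_st[OF yS] by (metis image_eqI)
      have conI: "connected I" unfolding I_def
        using JIO continuous_on_subset[OF continuous_ist] by (auto intro: connected_continuous_image)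
      have IS: "I \<subseteq> S2 - J" unfolding I_def using ist_S2 ist_notJ inside_no_overlap by fastforce
      have yC': "y \<in> C" using yC by (simp add: C_def J_def)
      have IC: "I \<subseteq> C"
        using connected_component_maximal[OF yI conI IS] connected_component_eq[OF yC'[unfolded C_def]] by (simp add: C_def)
      have Ieq: "I = (S2 - {q}) \<inter> st -` inside \<Gamma>"
        unfolding I_def using ist_S2 st_ist ist_st by (auto simp: image_iff) metis
      have "openin (top_of_set (S2 - {q})) I"
        unfolding Ieq by (rule continuous_openin_preimage_gen[OF continuous_st]) (use JIO in auto)
      then obtain Op where O: "open Op" "I = (S2 - {q}) \<inter> Op" by (auto simp: openin_open)
      have Ieq2: "I = C \<inter> (Op - {q})" using O IC CS by blast
      have opI: "openin (top_of_set C) I"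
        unfolding Ieq2 by (rule openin_open_Int) (use O(1) in \<open>simp add: open_delete\<close>)
      define T0 where "T0 = closure (inside \<Gamma>)"
      have T0sub: "T0 \<subseteq> \<Gamma> \<union> inside \<Gamma>"
        unfolding T0_def by (rule closure_inside_subset) (use cG compact_imp_closed in auto)
      have "compact T0" unfolding T0_def using JIO by (simp add: compact_eq_bounded_closed bounded_closure)
      then have "compact (ist ` T0)"
        by (rule compact_continuous_image[OF continuous_on_subset[OF continuous_ist], rotated]) auto
      moreover have "q \<notin> ist ` T0" using ist_ne by (metis imageE)
      ultimately obtain d where d: "d > 0" "\<forall>x\<in>ist ` T0. d \<le> dist q x"
        using separate_point_closed compact_imp_closed by metis
      have "closedin (top_of_set (S2 - {q})) ((S2 - {q}) \<inter> st -` T0)"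
        by (rule continuous_closedin_preimage[OF continuous_st]) (simp add: T0_def)
      then obtain F where F: "closed F" "(S2 - {q}) \<inter> st -` T0 = (S2 - {q}) \<inter> F"
        by (auto simp: closedin_closed)
      have "I = C \<inter> (F - ball q d)"
      proof
        show "I \<subseteq> C \<inter> (F - ball q d)"
        proof
          fix x assume xI: "x \<in> I"
          then obtain z where z: "z \<in> inside \<Gamma>" "x = ist z" by (auto simp: I_def)
          have zT: "z \<in> T0" using z closure_subset by (auto simp: T0_def)
          have "x \<in> (S2 - {q}) \<inter> st -` T0" using z zT ist_S2 st_ist by auto
          then have "x \<in> F" using F by blast
          moreover have "d \<le> dist q x" using d zT z by auto
          ultimately show "x \<in> C \<inter> (F - ball q d)" using xI IC by auto
        qed
        show "C \<inter> (F - ball q d) \<subseteq> I"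
        proof
          fix x assume x: "x \<in> C \<inter> (F - ball q d)"
          then have "x \<noteq> q" using d by auto
          moreover have xS: "x \<in> S2 - J" using x CS by auto
          ultimately have xS': "x \<in> S2 - {q}" by auto
          then have "st x \<in> T0" using F x by auto
          then have "st x \<in> \<Gamma> \<union> inside \<Gamma>" using T0sub by auto
          moreover have "st x \<notin> \<Gamma>" using stJ[OF xS'] xS by auto
          ultimately have "st x \<in> inside \<Gamma>" by auto
          then show "x \<in> I" unfolding I_def using ist_st[OF xS'] by (metis image_eqI)
        qed
      qed
      then have clI: "closedin (top_of_set C) I"
        by (metis closedin_closed_Int F(1) closed_Diff open_ball)
      have "I = {} \<or> I = C" using conC[unfolded connected_clopen] opI clI by blast
      then have "q \<in> I" using yI qC by auto
      then show False using ist_ne unfolding I_def by (metis imageE)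
    qed
  next
    assume yo: "st y \<in> outside (path_image (st \<circ> \<gamma>))"
    define L where "L = ist ` outside \<Gamma>"
    have conL: "connected L" unfolding L_def
      using JIO continuous_on_subset[OF continuous_ist] by (auto intro: connected_continuous_image)
    have LS: "L \<subseteq> S2 - J" unfolding L_def using ist_S2 ist_notJ outside_no_overlap by fastforce
    have yL: "y \<in> L" unfolding L_def using yo ist_st[OF yS] by (metis \<Gamma>_def image_eqI)
    have "bounded (- outside \<Gamma>)" using cG by (simp add: cobounded_outside compact_imp_bounded)
    then obtain R where R: "\<And>z. z \<in> - outside \<Gamma> \<Longrightarrow> norm z \<le> R" by (auto simp: bounded_iff)
    have qcl: "q \<in> closure L"
      unfolding closure_approachable
    proof (intro allI impI)
      fix e :: real assume e: "e > 0"
      define t where "t = max R (2 / e) + 1"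
      have tR: "t > R" and te: "t > 2 / e" by (auto simp: t_def)
      have tpos: "t > 0" using te e by (smt (verit) divide_pos_pos)
      have zo: "complex_of_real t \<in> outside \<Gamma>"
      proof (rule ccontr)
        assume "complex_of_real t \<notin> outside \<Gamma>"
        then have "norm (complex_of_real t) \<le> R" using R by blast
        then show False using tR tpos by simp
      qed
      have "(dist (ist (complex_of_real t)) q)\<^sup>2 = 4 / (t\<^sup>2 + 1)"
        using dist_ist_sq[of "complex_of_real t"] tpos by simp
      also have "\<dots> < e\<^sup>2"
      proof -
        have "2 < t * e" using te e by (simp add: field_simps)
        then have "(2::real)\<^sup>2 < (t * e)\<^sup>2" by (intro power_strict_mono) auto
        then have "4 < e\<^sup>2 * (t\<^sup>2 + 1)" by (simp add: power_mult_distrib algebra_simps) (smt (verit) zero_le_power2)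
        moreover have "t\<^sup>2 + 1 > 0" by (smt (verit) zero_le_power2)
        ultimately show ?thesis by (simp add: pos_divide_less_eq)
      qed
      finally have d2: "(dist (ist (complex_of_real t)) q)\<^sup>2 < e\<^sup>2" .
      have "dist (ist (complex_of_real t)) q < e"
        using power2_less_imp_less[OF d2] e by linarith
      moreover have "ist (complex_of_real t) \<in> L" unfolding L_def using zo by (rule imageI)
      ultimately show "\<exists>y\<in>L. dist y q < e" by blast
    qed
    have "connected (insert q L)"
      by (rule connected_intermediate_closure[OF conL]) (use qcl closure_subset in auto)
    moreover have "insert q L \<subseteq> S2 - J" using LS qin by auto
    ultimately have "insert q L \<subseteq> connected_component_set (S2 - J) q"
      by (intro connected_component_maximal) auto
    then show "y \<in> connected_component_set (S2 - path_image \<gamma>) q" using yL by (auto simp: J_def)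
  qed
qed

lemma inside_same_comp:
  assumes sp: "simple_path \<gamma>" and cl: "pathfinish \<gamma> = pathstart \<gamma>"
    and Jsub: "path_image \<gamma> \<subseteq> S2 - {q}"
    and y: "y \<in> S2 - {q}" and y': "y' \<in> S2 - {q}"
    and yi: "st y \<in> inside (path_image (st \<circ> \<gamma>))" and yi': "st y' \<in> inside (path_image (st \<circ> \<gamma>))"
  shows "y' \<in> connected_component_set (S2 - path_image \<gamma>) y"
proof -
  define \<Gamma> where "\<Gamma> = path_image (st \<circ> \<gamma>)"
  have spG: "simple_path (st \<circ> \<gamma>)" and GJ: "\<Gamma> = st ` path_image \<gamma>"
    using st_loop[OF sp Jsub] by (auto simp: \<Gamma>_def)
  have clG: "pathfinish (st \<circ> \<gamma>) = pathstart (st \<circ> \<gamma>)"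
    using cl by (simp add: pathfinish_compose pathstart_compose)
  note JIO = Jordan_inside_outside[OF spG clG, folded \<Gamma>_def]
  define I where "I = ist ` inside \<Gamma>"
  have conI: "connected I" unfolding I_def
    using JIO continuous_on_subset[OF continuous_ist] by (auto intro: connected_continuous_image)
  have ist_notJ: "z \<notin> \<Gamma> \<Longrightarrow> ist z \<notin> path_image \<gamma>" for z
    using GJ st_ist by (metis image_eqI)
  have IS: "I \<subseteq> S2 - path_image \<gamma>" unfolding I_def using ist_S2 ist_notJ inside_no_overlap by fastforce
  have "y \<in> I" "y' \<in> I" unfolding I_def using yi yi' ist_st[OF y] ist_st[OF y'] \<Gamma>_def by (metis image_eqI)+
  then show ?thesis using connected_component_maximal[OF _ conI IS] by blast
qed

end

lemma topo:
  fixes \<alpha> B1 B3 :: "real \<Rightarrow> real^3"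
  assumes arcs: "arc \<alpha>" "arc B1" "arc B3"
    and ends1: "pathstart B1 = pathfinish \<alpha>" "pathfinish B1 = pathstart \<alpha>"
    and ends3: "pathstart B3 = pathfinish \<alpha>" "pathfinish B3 = pathstart \<alpha>"
    and int1: "path_image B1 \<inter> path_image \<alpha> \<subseteq> {pathstart \<alpha>, pathfinish \<alpha>}"
    and int3: "path_image B3 \<inter> path_image \<alpha> \<subseteq> {pathstart \<alpha>, pathfinish \<alpha>}"
    and subs: "path_image \<alpha> \<subseteq> S2" "path_image B1 \<subseteq> S2" "path_image B3 \<subseteq> S2"
    and J1: "J1 = path_image \<alpha> \<union> path_image B1"
    and J3: "J3 = path_image \<alpha> \<union> path_image B3"
    and c1: "y1 \<in> S2 - J1" "c1 = connected_component_set (S2 - J1) y1"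
    and c3: "q \<in> S2 - J3" "c3 = connected_component_set (S2 - J3) q"
    and c2: "connected c2" "c2 \<subseteq> S2 - J1 - J3"
    and c3J1: "c3 \<inter> J1 = {}"
    and disj: "c1 \<inter> c3 = {}" "c1 \<inter> c2 = {}" "c2 \<inter> c3 = {}"
    and p2: "\<alpha> (1/2) \<in> closure c2" and p3: "\<alpha> (1/2) \<in> closure c3"
  shows False
proof -
  define \<gamma>1 where "\<gamma>1 = \<alpha> +++ B1"
  define \<gamma>3 where "\<gamma>3 = \<alpha> +++ B3"
  have sp1: "simple_path \<gamma>1" unfolding \<gamma>1_def
    by (rule simple_path_join_loop) (use arcs ends1 int1 in auto)
  have sp3: "simple_path \<gamma>3" unfolding \<gamma>3_def
    by (rule simple_path_join_loop) (use arcs ends3 int3 in auto)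
  have cl1: "pathfinish \<gamma>1 = pathstart \<gamma>1" and cl3: "pathfinish \<gamma>3 = pathstart \<gamma>3"
    using ends1 ends3 by (auto simp: \<gamma>1_def \<gamma>3_def)
  have pa: "path \<alpha>" "path B1" "path B3" using arcs arc_imp_path by auto
  have im1: "path_image \<gamma>1 = J1" and im3: "path_image \<gamma>3 = J3"
    using ends1 ends3 pa by (auto simp: \<gamma>1_def \<gamma>3_def J1 J3 path_image_join)
  have qc3: "q \<in> c3" using c3 by simp
  have qS: "q \<in> S2" using c3 by auto
  have qJ1: "q \<notin> J1" using qc3 c3J1 by auto
  have qJ3: "q \<notin> J3" using c3 by auto
  have nq: "norm q = 1" using qS by (simp add: S2_def)
  obtain a b where fr: "norm a = 1" "norm b = 1" "a \<bullet> b = 0" "a \<bullet> q = 0" "b \<bullet> q = 0"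
    "\<And>y. y = (y \<bullet> a) *\<^sub>R a + (y \<bullet> b) *\<^sub>R b + (y \<bullet> q) *\<^sub>R q"
    using frame_exists[OF nq] by metis
  interpret F: sframe q a b using fr nq by unfold_locales auto
  have J1s: "J1 \<subseteq> S2 - {q}" using J1 subs qJ1 by auto
  have J3s: "J3 \<subseteq> S2 - {q}" using J3 subs qJ3 by auto
  define p where "p = \<alpha> (1/2)"
  have pA: "p \<in> path_image \<alpha>" by (auto simp: p_def path_image_def)
  have pne: "p \<noteq> pathstart \<alpha>" "p \<noteq> pathfinish \<alpha>"
    using arcs(1) unfolding arc_def p_def pathstart_def pathfinish_def
    by (auto dest: inj_onD)
  have pB1: "p \<notin> path_image B1" using int1 pA pne by auto
  have pB3: "p \<notin> path_image B3" using int3 pA pne by auto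
  have pS: "p \<in> S2 - {q}" using pA subs qJ3 J3 by auto
  define lp where "lp = (F.st \<circ> B1) +++ reversepath (F.st \<circ> B3)"
  have B1s: "path_image B1 \<subseteq> S2 - {q}" and B3s: "path_image B3 \<subseteq> S2 - {q}"
    and As: "path_image \<alpha> \<subseteq> S2 - {q}"
    using J1s J3s J1 J3 by auto
  have pst: "path (F.st \<circ> B1)" "path (F.st \<circ> B3)" "path (F.st \<circ> \<alpha>)"
    using pa B1s B3s As
    by (auto intro!: path_continuous_image continuous_on_subset[OF F.continuous_st])
  have pl: "path lp" unfolding lp_def
    using pst ends1 ends3 by (auto intro!: path_join_imp simp: pathstart_compose pathfinish_compose)
  have cll: "pathfinish lp = pathstart lp" unfolding lp_def
    using ends1 ends3 by (simp add: pathstart_compose pathfinish_compose)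
  have stnot: "F.st y \<notin> F.st ` K" if "y \<in> S2 - {q}" "K \<subseteq> S2 - {q}" "y \<notin> K" for y K
  proof
    assume "F.st y \<in> F.st ` K"
    then obtain x where x: "x \<in> K" "F.st y = F.st x" by auto
    then have "F.ist (F.st y) = F.ist (F.st x)" by simp
    moreover have "x \<in> S2 - {q}" using x that by auto
    ultimately have "y = x" using F.ist_st[of x] F.ist_st[of y] that by simp
    then show False using that x by auto
  qed
  have img_l: "path_image lp = F.st ` path_image B1 \<union> F.st ` path_image B3"
    unfolding lp_def using ends1 ends3
    by (simp add: path_image_join path_image_compose pathstart_compose pathfinish_compose)
  have "F.st p \<notin> path_image lp" unfolding img_l using stnot[OF pS B1s pB1] stnot[OF pS B3s pB3] by auto
  moreover have "closed (path_image lp)" by (simp add: closed_path_image pl)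
  ultimately obtain \<epsilon> where \<epsilon>: "\<epsilon> > 0" "ball (F.st p) \<epsilon> \<subseteq> - path_image lp"
    using open_contains_ball[of "- path_image lp"] by blast
  obtain k where k: "\<And>z. z \<in> ball (F.st p) \<epsilon> \<Longrightarrow> winding_number lp z = k"
    using winding_number_constant[OF pl cll connected_ball, of "F.st p" \<epsilon>] \<epsilon>
    unfolding constant_on_def by blast
  obtain \<delta> where \<delta>: "\<delta> > 0" "\<And>y. y \<in> S2 - {q} \<Longrightarrow> dist y p < \<delta> \<Longrightarrow> dist (F.st y) (F.st p) < \<epsilon>"
    using F.continuous_st pS \<epsilon>(1) unfolding continuous_on_iff by blast
  obtain y2 where y2: "y2 \<in> c2" "dist y2 p < \<delta>"
    using p2 \<delta>(1) unfolding closure_approachable p_def by blast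
  have pq: "dist p q > 0" using pS by auto
  obtain y3 where y3: "y3 \<in> c3" "dist y3 p < min \<delta> (dist p q)"
  proof -
    have "min \<delta> (dist p q) > 0" using \<delta>(1) pq by simp
    then show ?thesis using p3 that unfolding closure_approachable p_def by blast
  qed
  have y2S: "y2 \<in> S2 - J1 - J3 - {q}" using y2 c2 qc3 disj by auto
  have y3q: "y3 \<noteq> q" using y3 by (auto simp: dist_commute)
  have c3S: "c3 \<subseteq> S2 - J3" using c3 connected_component_subset by metis
  have y3S: "y3 \<in> S2 - J1 - J3 - {q}" using y3 y3q c3S c3J1 by auto
  have dec: "winding_number lp (F.st y) = winding_number (F.st \<circ> \<gamma>1) (F.st y) - winding_number (F.st \<circ> \<gamma>3) (F.st y)"
    if y: "y \<in> S2 - J1 - J3 - {q}" for y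
  proof -
    have yS: "y \<in> S2 - {q}" using y by auto
    have nA: "F.st y \<notin> path_image (F.st \<circ> \<alpha>)" using stnot[OF yS As] y J1 by (auto simp: path_image_compose)
    have nB1: "F.st y \<notin> path_image (F.st \<circ> B1)" using stnot[OF yS B1s] y J1 by (auto simp: path_image_compose)
    have nB3: "F.st y \<notin> path_image (F.st \<circ> B3)" using stnot[OF yS B3s] y J3 by (auto simp: path_image_compose)
    have e1: "winding_number (F.st \<circ> \<gamma>1) (F.st y) = winding_number (F.st \<circ> \<alpha>) (F.st y) + winding_number (F.st \<circ> B1) (F.st y)"
      unfolding \<gamma>1_def path_compose_join
      by (rule winding_number_join) (use pst nA nB1 ends1 in \<open>auto simp: pathstart_compose pathfinish_compose\<close>)
    have e3: "winding_number (F.st \<circ> \<gamma>3) (F.st y) = winding_number (F.st \<circ> \<alpha>) (F.st y) + winding_number (F.st \<circ> B3) (F.st y)"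
      unfolding \<gamma>3_def path_compose_join
      by (rule winding_number_join) (use pst nA nB3 ends3 in \<open>auto simp: pathstart_compose pathfinish_compose\<close>)
    have el: "winding_number lp (F.st y) = winding_number (F.st \<circ> B1) (F.st y) - winding_number (F.st \<circ> B3) (F.st y)"
      unfolding lp_def
      using winding_number_join[of "F.st \<circ> B1" "F.st y" "reversepath (F.st \<circ> B3)"]
        winding_number_reversepath[of "F.st \<circ> B3" "F.st y"] pst nB1 nB3 ends1 ends3
      by (simp add: pathstart_compose pathfinish_compose)
    show ?thesis using e1 e3 el by simp
  qed
  have spst1: "simple_path (F.st \<circ> \<gamma>1)" using F.st_loop[OF sp1] J1s im1 by auto
  have spst3: "simple_path (F.st \<circ> \<gamma>3)" using F.st_loop[OF sp3] J3s im3 by auto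
  have clst1: "pathfinish (F.st \<circ> \<gamma>1) = pathstart (F.st \<circ> \<gamma>1)"
    using cl1 by (simp add: pathstart_compose pathfinish_compose)
  have clst3: "pathfinish (F.st \<circ> \<gamma>3) = pathstart (F.st \<circ> \<gamma>3)"
    using cl3 by (simp add: pathstart_compose pathfinish_compose)
  have imst1: "path_image (F.st \<circ> \<gamma>1) = F.st ` J1" using im1 by (simp add: path_image_compose)
  have imst3: "path_image (F.st \<circ> \<gamma>3) = F.st ` J3" using im3 by (simp add: path_image_compose)
  note sj1 = F.sj[OF sp1 cl1, unfolded im1, OF J1s]
  note sj3 = F.sj[OF sp3 cl3, unfolded im3, OF J3s]
  have pth1: "path (F.st \<circ> \<gamma>1)" and pth3: "path (F.st \<circ> \<gamma>3)"
    using spst1 spst3 simple_path_imp_path by auto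
  have "c3 \<subseteq> connected_component_set (S2 - J1) q"
    by (rule connected_component_maximal[OF qc3]) (use c3 c3S c3J1 in auto)
  then have "F.st y3 \<in> outside (path_image (F.st \<circ> \<gamma>1))" using sj1 y3S y3 by (auto simp: imst1)
  then have w31: "winding_number (F.st \<circ> \<gamma>1) (F.st y3) = 0"
    by (rule winding_number_zero_in_outside[OF pth1 clst1])
  have "F.st y3 \<in> outside (path_image (F.st \<circ> \<gamma>3))" using sj3 y3S y3 c3 by auto
  then have w33: "winding_number (F.st \<circ> \<gamma>3) (F.st y3) = 0"
    by (rule winding_number_zero_in_outside[OF pth3 clst3])
  have y2S': "y2 \<in> S2 - {q}" using y2S by auto
  have "y2 \<notin> connected_component_set (S2 - J3) q" using y2 c3 disj by auto
  then have "F.st y2 \<notin> outside (path_image (F.st \<circ> \<gamma>3))" using sj3 y2S by auto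
  moreover have "F.st y2 \<notin> path_image (F.st \<circ> \<gamma>3)" unfolding imst3 using stnot[OF y2S' J3s] y2S by auto
  ultimately have "F.st y2 \<in> inside (path_image (F.st \<circ> \<gamma>3))"
    using inside_Un_outside by blast
  then have w23: "norm (winding_number (F.st \<circ> \<gamma>3) (F.st y2)) = 1"
    by (rule simple_closed_path_norm_winding_number_inside[OF spst3])
  have "y2 \<in> connected_component_set (S2 - J1) q"
  proof (rule ccontr)
    assume n2: "y2 \<notin> connected_component_set (S2 - J1) q"
    have y1c1: "y1 \<in> c1" using c1 by simp
    have y1q: "y1 \<noteq> q" using y1c1 qc3 disj by auto
    have y1S: "y1 \<in> S2 - {q}" using c1 y1q by auto
    have n1: "y1 \<notin> connected_component_set (S2 - J1) q"
    proof
      assume "y1 \<in> connected_component_set (S2 - J1) q"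
      then have "q \<in> c1" using c1 connected_component_eq connected_component_refl_eq qS qJ1
        by (metis Diff_iff mem_Collect_eq)
      then show False using qc3 disj by auto
    qed
    have i1: "F.st y1 \<in> inside (path_image (F.st \<circ> \<gamma>1))"
    proof -
      have "F.st y1 \<notin> outside (path_image (F.st \<circ> \<gamma>1))" using sj1 n1 c1 y1q by auto
      moreover have "F.st y1 \<notin> path_image (F.st \<circ> \<gamma>1)" unfolding imst1 using stnot[OF y1S J1s] c1 by auto
      ultimately show ?thesis using inside_Un_outside by blast
    qed
    have i2: "F.st y2 \<in> inside (path_image (F.st \<circ> \<gamma>1))"
    proof -
      have "F.st y2 \<notin> outside (path_image (F.st \<circ> \<gamma>1))" using sj1 n2 y2S by auto
      moreover have "F.st y2 \<notin> path_image (F.st \<circ> \<gamma>1)" unfolding imst1 using stnot[OF y2S' J1s] y2S by auto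
      ultimately show ?thesis using inside_Un_outside by blast
    qed
    have "y2 \<in> c1" using F.inside_same_comp[OF sp1 cl1 _ y1S y2S' i1 i2] J1s im1 c1 by auto
    then show False using y2 disj by auto
  qed
  then have "F.st y2 \<in> outside (path_image (F.st \<circ> \<gamma>1))" using sj1 y2S by auto
  then have w21: "winding_number (F.st \<circ> \<gamma>1) (F.st y2) = 0"
    by (rule winding_number_zero_in_outside[OF pth1 clst1])
  have "dist (F.st y2) (F.st p) < \<epsilon>" using \<delta>(2)[OF y2S' y2(2)] .
  then have "winding_number lp (F.st y2) = k" using k by (simp add: dist_commute)
  moreover
  have y3S': "y3 \<in> S2 - {q}" using y3S by auto
  have "dist (F.st y3) (F.st p) < \<epsilon>" using \<delta>(2)[OF y3S'] y3(2) by simp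
  then have "winding_number lp (F.st y3) = k" using k by (simp add: dist_commute)
  ultimately have "winding_number lp (F.st y2) = winding_number lp (F.st y3)" by simp
  then have "winding_number (F.st \<circ> \<gamma>3) (F.st y2) = 0"
    using dec[OF y2S] dec[OF y3S] w21 w31 w33 by simp
  then show False using w23 by simp
qed

context
  fixes V :: "(real^3) set" and E :: "'e set" and g :: "'e \<Rightarrow> real \<Rightarrow> real^3"
  assumes dr: "drawing V E g"
begin

lemma dr_arc: "f \<in> E \<Longrightarrow> arc (g f)"
  using dr by (auto simp: drawing_def)

lemma dr_S2: "f \<in> E \<Longrightarrow> edge_set g f \<subseteq> S2"
  using dr by (auto simp: drawing_def)

lemma dr_ends: "f \<in> E \<Longrightarrow> edge_set g f \<inter> V = endpoints g f"
  using dr by (auto simp: drawing_def)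

lemma dr_inj: "f \<in> E \<Longrightarrow> inj_on (g f) {0..1}"
  using dr_arc by (auto simp: arc_def)

lemma dr_V: "V \<subseteq> S2" "finite V" "finite E"
  using dr by (auto simp: drawing_def)

lemma edge_set_eq: "edge_set g f = g f ` {0..1}"
  by (simp add: edge_set_def path_image_def)

lemma endpoints_eq: "endpoints g f = {g f 0, g f 1}"
  by (simp add: endpoints_def pathstart_def pathfinish_def)

lemma seg_props:
  assumes "edge_segment V E g f p q A"
  obtains s t where "f \<in> E" "0 \<le> s" "s < t" "t \<le> 1" "{g f s, g f t} = {p, q}" "A = g f ` {s..t}"
    "\<And>r. s < r \<Longrightarrow> r < t \<Longrightarrow> g f r \<notin> crossings V E g"
  using assms unfolding edge_segment_def by blast

lemma seg_ne:
  assumes "edge_segment V E g f p q A" shows "p \<noteq> q"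
proof -
  obtain s t where st: "f \<in> E" "0 \<le> s" "s < t" "t \<le> 1" "{g f s, g f t} = {p, q}"
    using seg_props[OF assms] by metis
  have "g f s \<noteq> g f t" using dr_inj[OF st(1)] st by (auto dest: inj_onD)
  then show ?thesis using st(5) by (auto simp: doubleton_eq_iff)
qed

lemma seg_sub:
  assumes "edge_segment V E g f p q A" shows "A \<subseteq> edge_set g f" "f \<in> E" "A \<subseteq> S2"
proof -
  obtain s t where st: "f \<in> E" "0 \<le> s" "s < t" "t \<le> 1" "A = g f ` {s..t}"
    using seg_props[OF assms] by metis
  show "A \<subseteq> edge_set g f" using st by (auto simp: edge_set_eq)
  then show "A \<subseteq> S2" using dr_S2[OF st(1)] by auto
  show "f \<in> E" by (rule st(1))
qed

lemma seg_ends_in: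
  assumes "edge_segment V E g f p q A" shows "p \<in> A" "q \<in> A"
proof -
  obtain s t where st: "f \<in> E" "0 \<le> s" "s < t" "t \<le> 1" "{g f s, g f t} = {p, q}" "A = g f ` {s..t}"
    using seg_props[OF assms] by metis
  have "g f s \<in> A" "g f t \<in> A" using st by auto
  then show "p \<in> A" "q \<in> A" using st(5) by (auto simp: doubleton_eq_iff)
qed

lemma seg_arc:
  assumes "edge_segment V E g f p q A"
  obtains \<alpha> where "arc \<alpha>" "pathstart \<alpha> = p" "pathfinish \<alpha> = q" "path_image \<alpha> = A"
proof -
  obtain s t where st: "f \<in> E" "0 \<le> s" "s < t" "t \<le> 1" "{g f s, g f t} = {p, q}" "A = g f ` {s..t}"
    using seg_props[OF assms] by metis
  have a: "arc (g f)" using dr_arc[OF st(1)] .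
  have pq: "p \<noteq> q" using seg_ne[OF assms] .
  show ?thesis
  proof (cases "g f s = p")
    case True
    then have "g f t = q" using st(5) pq by (auto simp: doubleton_eq_iff)
    then show ?thesis
      using that[of "subpath s t (g f)"] arc_subpath_arc[OF a, of s t] st True
      by (auto simp: path_image_subpath)
  next
    case False
    then have "g f s = q" "g f t = p" using st(5) by (auto simp: doubleton_eq_iff)
    then show ?thesis
      using that[of "subpath t s (g f)"] arc_subpath_arc[OF a, of t s] st
      by (auto simp: path_image_subpath)
  qed
qed

lemma seg_VC:
  assumes "edge_segment V E g f p q A" "y \<in> A" "y \<in> V \<union> crossings V E g"
  shows "y \<in> {p, q}"
proof -
  obtain s t where st: "f \<in> E" "0 \<le> s" "s < t" "t \<le> 1" "{g f s, g f t} = {p, q}" "A = g f ` {s..t}"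
    "\<And>r. s < r \<Longrightarrow> r < t \<Longrightarrow> g f r \<notin> crossings V E g"
    using seg_props[OF assms(1)] by metis
  obtain r where r: "r \<in> {s..t}" "y = g f r" using st assms(2) by auto
  show ?thesis
  proof (cases "r = s \<or> r = t")
    case True
    then show ?thesis using r st(5) by auto
  next
    case False
    then have rr: "s < r" "r < t" using r by auto
    have "y \<notin> crossings V E g" using st(7)[OF rr] r by simp
    then have yV: "y \<in> V" using assms(3) by auto
    have "y \<in> edge_set g f" using r st by (auto simp: edge_set_eq)
    then have "y \<in> endpoints g f" using dr_ends[OF st(1)] yV by auto
    then have "g f r = g f 0 \<or> g f r = g f 1" using r by (auto simp: endpoints_eq)
    then have "r = 0 \<or> r = 1" using dr_inj[OF st(1)] r st by (auto dest: inj_onD)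
    then show ?thesis using rr st by auto
  qed
qed

lemma seg_one:
  assumes S: "edge_segment V E g f p q A" and S': "edge_segment V E g f' p' q' A'"
    and VC: "{p, q, p', q'} \<subseteq> V \<union> crossings V E g" and ne: "{p, q} \<noteq> {p', q'}"
    and y: "y \<in> A" "y \<in> A'"
  shows "y \<in> {p, q}"
proof (cases "f = f'")
  case False
  have fE: "f \<in> E" "f' \<in> E" using seg_sub[OF S] seg_sub[OF S'] by auto
  have "y \<in> edge_set g f" "y \<in> edge_set g f'" using seg_sub[OF S] seg_sub[OF S'] y by auto
  then have "y \<in> V \<union> crossings V E g" using False fE by (auto simp: crossings_def)
  then show ?thesis using seg_VC[OF S y(1)] by auto
next
  case True
  obtain s t where st: "f \<in> E" "0 \<le> s" "s < t" "t \<le> 1" "{g f s, g f t} = {p, q}" "A = g f ` {s..t}"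
    using seg_props[OF S] by metis
  obtain s' t' where st': "0 \<le> s'" "s' < t'" "t' \<le> 1" "{g f s', g f t'} = {p', q'}" "A' = g f ` {s'..t'}"
    using seg_props[OF S'] True by metis
  have inj: "inj_on (g f) {0..1}" using dr_inj[OF st(1)] .
  have pq: "p \<noteq> q" using seg_ne[OF S] .
  show ?thesis
  proof (rule ccontr)
    assume yn: "y \<notin> {p, q}"
    obtain r where r: "r \<in> {s..t}" "y = g f r" using st y by auto
    obtain r' where r': "r' \<in> {s'..t'}" "y = g f r'" using st' y by auto
    have "r = r'" using inj r r' st st' by (auto dest: inj_onD)
    have rst: "s < r" "r < t" using r yn st(5) by (auto simp: order_le_less)
    have endsVC: "g f s' \<in> V \<union> crossings V E g" "g f t' \<in> V \<union> crossings V E g"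
      using st'(4) VC by auto
    have notin: "\<not> (s < w \<and> w < t)" if "w \<in> {s', t'}" for w
    proof
      assume w: "s < w \<and> w < t"
      have "g f w \<in> A" using w st by auto
      moreover have "g f w \<in> V \<union> crossings V E g" using that endsVC by auto
      ultimately have "g f w \<in> {p, q}" using seg_VC[OF S] by auto
      then have "g f w = g f s \<or> g f w = g f t" using st(5) by auto
      moreover have "w \<in> {0..1}" "s \<in> {0..1}" "t \<in> {0..1}" using w st by auto
      ultimately have "w = s \<or> w = t" using inj_onD[OF inj] by metis
      then show False using w by auto
    qed
    have "s' \<le> s" using notin[of s'] r' \<open>r = r'\<close> rst by auto
    moreover have "t \<le> t'" using notin[of t'] r' \<open>r = r'\<close> rst by auto
    ultimately have "g f s \<in> A'" "g f t \<in> A'" using st st' by auto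
    moreover have "g f s \<in> V \<union> crossings V E g" "g f t \<in> V \<union> crossings V E g"
      using st(5) VC by auto
    ultimately have "g f s \<in> {p', q'}" "g f t \<in> {p', q'}" using seg_VC[OF S'] by auto
    then have "{p, q} \<subseteq> {p', q'}" using st(5) by auto
    then have "{p, q} = {p', q'}" using pq by auto
    then show False using ne by simp
  qed
qed

lemma seg_int:
  assumes S: "edge_segment V E g f p q A" and S': "edge_segment V E g f' p' q' A'"
    and VC: "{p, q, p', q'} \<subseteq> V \<union> crossings V E g" and ne: "{p, q} \<noteq> {p', q'}"
  shows "A \<inter> A' \<subseteq> {p, q} \<inter> {p', q'}"
proof
  fix y assume "y \<in> A \<inter> A'"
  then have "y \<in> {p, q}" "y \<in> {p', q'}"
    using seg_one[OF S S' VC ne] seg_one[OF S' S _ ne[symmetric]] VC by auto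
  then show "y \<in> {p, q} \<inter> {p', q'}" by auto
qed

lemma unc_seg:
  assumes "e \<in> uncrossed_edges V E g" "endpoints g e = {u, v}"
  shows "edge_segment V E g e u v (edge_set g e)"
proof -
  have eE: "e \<in> E" using assms by (simp add: uncrossed_edges_def)
  have "0 \<le> (0::real) \<and> (0::real) < 1 \<and> (1::real) \<le> 1 \<and> {g e 0, g e 1} = {u, v} \<and>
     edge_set g e = g e ` {0..1} \<and> (\<forall>r. 0 < r \<and> r < 1 \<longrightarrow> g e r \<notin> crossings V E g)"
    using assms by (auto simp: endpoints_eq edge_set_eq uncrossed_edges_def) (metis atLeastAtMost_iff disjoint_iff image_eqI less_eq_real_def)
  then show ?thesis unfolding edge_segment_def using eE by blast
qed

lemma P_closed: "closed (drawing_points V E g)"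
proof -
  have "closed (\<Union>f\<in>E. edge_set g f)"
    using dr_V(3) dr_arc
    by (intro closed_UN) (auto simp: edge_set_def closed_path_image arc_imp_path)
  then show ?thesis unfolding drawing_points_def using dr_V(2) by (simp add: finite_imp_closed closed_Un)
qed

lemma cell_basic:
  assumes "c \<in> cells V E g"
  shows "connected c" "c \<noteq> {}" "c \<subseteq> S2 - drawing_points V E g" "openin (top_of_set S2) c"
proof -
  show "connected c" "c \<noteq> {}" "c \<subseteq> S2 - drawing_points V E g"
    using assms by (auto simp: cells_def in_components_connected in_components_nonempty dest: in_components_subset)
  have op: "openin (top_of_set S2) (S2 - drawing_points V E g)"
    using P_closed by (simp add: Diff_eq openin_open_Int open_Compl)
  have lc: "locally connected S2" by (simp add: S2_def locally_connected_sphere)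
  show "openin (top_of_set S2) c"
    using lc[unfolded locally_connected_open_component] op assms by (auto simp: cells_def)
qed

lemma S2_closed: "closed S2" by (simp add: S2_def)

lemma cell_disj:
  assumes "c \<in> cells V E g" "c' \<in> cells V E g" "c \<noteq> c'"
  shows "c \<inter> c' = {}"
  using assms components_nonoverlap by (auto simp: cells_def)

lemma cell_closure_disj:
  assumes c: "c \<in> cells V E g" and c': "c' \<in> cells V E g" and ne: "c \<noteq> c'"
  shows "c' \<inter> closure c = {}"
proof -
  obtain Op where Op: "open Op" "c' = S2 \<inter> Op" using cell_basic(4)[OF c'] by (auto simp: openin_open)
  have cS: "c \<subseteq> S2" using cell_basic(3)[OF c] by auto
  have "Op \<inter> c = {}" using cell_disj[OF c c' ne] Op cS by auto
  then have "Op \<inter> closure c = {}" using open_Int_closure_eq_empty[OF Op(1)] by simp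
  then show ?thesis using Op by auto
qed

lemma cell_comp:
  assumes c: "c \<in> cells V E g" and y: "y \<in> c"
  shows "c = connected_component_set (S2 - cell_boundary c) y" "y \<in> S2 - cell_boundary c"
proof -
  define J where "J = cell_boundary c"
  have cS: "c \<subseteq> S2" using cell_basic(3)[OF c] by auto
  have cJ: "c \<subseteq> S2 - J" using cS by (auto simp: J_def cell_boundary_def)
  define K where "K = connected_component_set (S2 - J) y"
  have cK: "c \<subseteq> K" unfolding K_def by (rule connected_component_maximal[OF y cell_basic(1)[OF c] cJ])
  have KS: "K \<subseteq> S2 - J" unfolding K_def by (rule connected_component_subset)
  have conK: "connected K" unfolding K_def by simp
  obtain Op where Op: "open Op" "c = S2 \<inter> Op" using cell_basic(4)[OF c] by (auto simp: openin_open)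
  have "c = K \<inter> Op" using Op cK KS by auto
  then have o: "openin (top_of_set K) c" using Op(1) by (simp add: openin_open_Int)
  have "c = K \<inter> closure c" using cK KS closure_subset by (auto simp: J_def cell_boundary_def)
  then have cl: "closedin (top_of_set K) c" by (metis closedin_closed_Int closed_closure)
  have "c = {} \<or> c = K" using conK[unfolded connected_clopen] o cl by blast
  then show "c = connected_component_set (S2 - cell_boundary c) y" using y by (auto simp: K_def J_def)
  show "y \<in> S2 - cell_boundary c" using cJ y by (auto simp: J_def)
qed

lemma orient:
  assumes e: "e \<in> uncrossed_edges V E g" and ep: "endpoints g e = {u, v}"
    and Bv: "arc Bv" "pathstart Bv = v" "pathfinish Bv = u"
  shows "\<exists>B. arc B \<and> pathstart B = pathfinish (g e) \<and> pathfinish B = pathstart (g e) \<and> path_image B = path_image Bv"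
proof (cases "pathfinish (g e) = v")
  case True
  then have "pathstart (g e) = u" using ep by (auto simp: endpoints_def doubleton_eq_iff)
  then show ?thesis using True Bv by auto
next
  case False
  then have "pathfinish (g e) = u" "pathstart (g e) = v" using ep by (auto simp: endpoints_def doubleton_eq_iff)
  then show ?thesis using Bv arc_reversepath[OF Bv(1)]
    by (intro exI[of _ "reversepath Bv"]) auto
qed

lemma cell_data:
  assumes "is_U5 V E g c \<or> is_U6 V E g c"
  shows "\<exists>e B. e \<in> uncrossed_edges V E g \<and> arc B \<and> pathstart B = pathfinish (g e) \<and>
     pathfinish B = pathstart (g e) \<and> path_image B \<inter> edge_set g e \<subseteq> {pathstart (g e), pathfinish (g e)} \<and>
     path_image B \<subseteq> S2 \<and> cell_boundary c = edge_set g e \<union> path_image B"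
  using assms
proof
  assume "is_U5 V E g c"
  then obtain u v e x e1 e2 A1 A2 where U: "u \<in> V" "v \<in> V" "e \<in> uncrossed_edges V E g" "endpoints g e = {u, v}"
      "x \<in> crossings V E g" "edge_segment V E g e1 v x A1" "edge_segment V E g e2 x u A2"
      "cell_boundary c = edge_set g e \<union> A1 \<union> A2"
    unfolding is_U5_def by blast
  have sE: "edge_segment V E g e u v (edge_set g e)" by (rule unc_seg[OF U(3,4)])
  have uv: "u \<noteq> v" using seg_ne[OF sE] .
  have xV: "x \<notin> V" using U(5) by (auto simp: crossings_def)
  have VC: "{u, v, x} \<subseteq> V \<union> crossings V E g" using U by auto
  have n: "{v, x} \<noteq> {x, u}" "{v, x} \<noteq> {u, v}" "{x, u} \<noteq> {u, v}"
    using uv xV U(1,2) by (auto simp: doubleton_eq_iff)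
  have i12: "A1 \<inter> A2 \<subseteq> {x}" using seg_int[OF U(6) U(7) _ n(1)] VC uv xV U by auto
  have i1E: "A1 \<inter> edge_set g e \<subseteq> {u, v}" using seg_int[OF U(6) sE _ n(2)] VC by auto
  have i2E: "A2 \<inter> edge_set g e \<subseteq> {u, v}" using seg_int[OF U(7) sE _ n(3)] VC by auto
  obtain \<alpha>1 where a1: "arc \<alpha>1" "pathstart \<alpha>1 = v" "pathfinish \<alpha>1 = x" "path_image \<alpha>1 = A1"
    using seg_arc[OF U(6)] by metis
  obtain \<alpha>2 where a2: "arc \<alpha>2" "pathstart \<alpha>2 = x" "pathfinish \<alpha>2 = u" "path_image \<alpha>2 = A2"
    using seg_arc[OF U(7)] by metis
  have arcB: "arc (\<alpha>1 +++ \<alpha>2)" by (rule arc_join) (use a1 a2 i12 in auto)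
  have imB: "path_image (\<alpha>1 +++ \<alpha>2) = A1 \<union> A2"
    using a1 a2 by (simp add: path_image_join arc_imp_path)
  obtain B where B: "arc B" "pathstart B = pathfinish (g e)" "pathfinish B = pathstart (g e)"
      "path_image B = A1 \<union> A2"
    using orient[OF U(3,4) arcB] a1 a2 imB by auto
  have "path_image B \<inter> edge_set g e \<subseteq> {pathstart (g e), pathfinish (g e)}"
    using B(4) i1E i2E U(4) by (auto simp: endpoints_def)
  moreover have "path_image B \<subseteq> S2" using B(4) seg_sub(3)[OF U(6)] seg_sub(3)[OF U(7)] by auto
  moreover have "cell_boundary c = edge_set g e \<union> path_image B" using B(4) U(8) by auto
  ultimately show ?thesis using U(3) B by blast
next
  assume "is_U6 V E g c"
  then obtain u v e x1 x2 e1 e2 e3 A1 A2 A3 where U: "u \<in> V" "v \<in> V" "e \<in> uncrossed_edges V E g"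
      "endpoints g e = {u, v}" "x1 \<in> crossings V E g" "x2 \<in> crossings V E g"
      "edge_segment V E g e1 v x1 A1" "edge_segment V E g e2 x1 x2 A2" "edge_segment V E g e3 x2 u A3"
      "cell_boundary c = edge_set g e \<union> A1 \<union> A2 \<union> A3"
    unfolding is_U6_def by blast
  have sE: "edge_segment V E g e u v (edge_set g e)" by (rule unc_seg[OF U(3,4)])
  have uv: "u \<noteq> v" using seg_ne[OF sE] .
  have x12: "x1 \<noteq> x2" using seg_ne[OF U(8)] .
  have xV: "x1 \<notin> V" "x2 \<notin> V" using U(5,6) by (auto simp: crossings_def)
  have VC: "{u, v, x1, x2} \<subseteq> V \<union> crossings V E g" using U by auto
  have n: "{v, x1} \<noteq> {x1, x2}" "{x1, x2} \<noteq> {x2, u}" "{v, x1} \<noteq> {x2, u}"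
    "{v, x1} \<noteq> {u, v}" "{x1, x2} \<noteq> {u, v}" "{x2, u} \<noteq> {u, v}"
    using uv xV x12 U(1,2) by (auto simp: doubleton_eq_iff)
  have i12: "A1 \<inter> A2 \<subseteq> {x1}" using seg_int[OF U(7) U(8) _ n(1)] VC uv xV x12 U by auto
  have i23: "A2 \<inter> A3 \<subseteq> {x2}" using seg_int[OF U(8) U(9) _ n(2)] VC uv xV x12 U by auto
  have i13: "A1 \<inter> A3 \<subseteq> {}" using seg_int[OF U(7) U(9) _ n(3)] VC uv xV x12 U by auto
  have i1E: "A1 \<inter> edge_set g e \<subseteq> {u, v}" using seg_int[OF U(7) sE _ n(4)] VC by auto
  have i2E: "A2 \<inter> edge_set g e \<subseteq> {u, v}" using seg_int[OF U(8) sE _ n(5)] VC by auto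
  have i3E: "A3 \<inter> edge_set g e \<subseteq> {u, v}" using seg_int[OF U(9) sE _ n(6)] VC by auto
  obtain \<alpha>1 where a1: "arc \<alpha>1" "pathstart \<alpha>1 = v" "pathfinish \<alpha>1 = x1" "path_image \<alpha>1 = A1"
    using seg_arc[OF U(7)] by metis
  obtain \<alpha>2 where a2: "arc \<alpha>2" "pathstart \<alpha>2 = x1" "pathfinish \<alpha>2 = x2" "path_image \<alpha>2 = A2"
    using seg_arc[OF U(8)] by metis
  obtain \<alpha>3 where a3: "arc \<alpha>3" "pathstart \<alpha>3 = x2" "pathfinish \<alpha>3 = u" "path_image \<alpha>3 = A3"
    using seg_arc[OF U(9)] by metis
  have arc12: "arc (\<alpha>1 +++ \<alpha>2)" by (rule arc_join) (use a1 a2 i12 in auto)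
  have im12: "path_image (\<alpha>1 +++ \<alpha>2) = A1 \<union> A2"
    using a1 a2 by (simp add: path_image_join arc_imp_path)
  have arcB: "arc ((\<alpha>1 +++ \<alpha>2) +++ \<alpha>3)" by (rule arc_join) (use arc12 im12 a1 a2 a3 i13 i23 in auto)
  have imB: "path_image ((\<alpha>1 +++ \<alpha>2) +++ \<alpha>3) = A1 \<union> A2 \<union> A3"
    using a1 a2 a3 im12 by (simp add: path_image_join arc_imp_path)
  obtain B where B: "arc B" "pathstart B = pathfinish (g e)" "pathfinish B = pathstart (g e)"
      "path_image B = A1 \<union> A2 \<union> A3"
    using orient[OF U(3,4) arcB] a1 a2 a3 imB by auto
  have "path_image B \<inter> edge_set g e \<subseteq> {pathstart (g e), pathfinish (g e)}"
    using B(4) i1E i2E i3E U(4) by (auto simp: endpoints_def)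
  moreover have "path_image B \<subseteq> S2"
    using B(4) seg_sub(3)[OF U(7)] seg_sub(3)[OF U(8)] seg_sub(3)[OF U(9)] by auto
  moreover have "cell_boundary c = edge_set g e \<union> path_image B" using B(4) U(10) by auto
  ultimately show ?thesis using U(3) B by blast
qed

lemma U5_U6_disj:
  assumes "is_U5 V E g c" "is_U6 V E g c" shows False
proof -
  obtain u v e x e1 e2 A1 A2 where U: "u \<in> V" "v \<in> V" "e \<in> uncrossed_edges V E g" "endpoints g e = {u, v}"
      "x \<in> crossings V E g" "edge_segment V E g e1 v x A1" "edge_segment V E g e2 x u A2"
      "cell_boundary c = edge_set g e \<union> A1 \<union> A2"
    using assms(1) unfolding is_U5_def by blast
  obtain u' v' e' x1 x2 e1' e2' e3' A1' A2' A3' where W: "x1 \<in> crossings V E g" "x2 \<in> crossings V E g"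
      "edge_segment V E g e1' v' x1 A1'" "edge_segment V E g e2' x1 x2 A2'"
      "cell_boundary c = edge_set g e' \<union> A1' \<union> A2' \<union> A3'"
    using assms(2) unfolding is_U6_def by blast
  have bx: "cell_boundary c \<inter> crossings V E g \<subseteq> {x}"
  proof
    fix y assume y: "y \<in> cell_boundary c \<inter> crossings V E g"
    have yV: "y \<notin> V" using y by (auto simp: crossings_def)
    have "y \<notin> edge_set g e" using U(3) y by (auto simp: uncrossed_edges_def)
    then have "y \<in> A1 \<or> y \<in> A2" using y U(8) by auto
    then show "y \<in> {x}" using seg_VC[OF U(6)] seg_VC[OF U(7)] y yV U(1,2) by auto
  qed
  have "x1 \<in> cell_boundary c" "x2 \<in> cell_boundary c"
    using seg_ends_in[OF W(3)] seg_ends_in[OF W(4)] W(5) by auto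
  then have "x1 = x" "x2 = x" using bx W(1,2) by auto
  then show False using seg_ne[OF W(4)] by simp
qed

lemma no_three:
  assumes c1: "c1 \<in> cells V E g" and c2: "c2 \<in> cells V E g" and c3: "c3 \<in> cells V E g"
    and ne: "c1 \<noteq> c2" "c1 \<noteq> c3" "c2 \<noteq> c3"
    and d1: "arc B1" "pathstart B1 = pathfinish (g e)" "pathfinish B1 = pathstart (g e)"
       "path_image B1 \<inter> edge_set g e \<subseteq> {pathstart (g e), pathfinish (g e)}" "path_image B1 \<subseteq> S2"
       "cell_boundary c1 = edge_set g e \<union> path_image B1"
    and d2: "cell_boundary c2 = edge_set g e \<union> path_image B2"
    and d3: "arc B3" "pathstart B3 = pathfinish (g e)" "pathfinish B3 = pathstart (g e)"
       "path_image B3 \<inter> edge_set g e \<subseteq> {pathstart (g e), pathfinish (g e)}" "path_image B3 \<subseteq> S2"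
       "cell_boundary c3 = edge_set g e \<union> path_image B3"
    and eE: "e \<in> E"
  shows False
proof -
  obtain y1 where y1: "y1 \<in> c1" using cell_basic(2)[OF c1] by auto
  obtain q where q: "q \<in> c3" using cell_basic(2)[OF c3] by auto
  have es: "edge_set g e = path_image (g e)" by (simp add: edge_set_def)
  have ph: "g e (1/2) \<in> edge_set g e" by (auto simp: edge_set_eq)
  have cb: "cell_boundary c \<subseteq> closure c" for c by (auto simp: cell_boundary_def)
  show False
  proof (rule topo[of "g e" B1 B3])
    show "arc (g e)" by (rule dr_arc[OF eE])
    show "path_image (g e) \<subseteq> S2" using dr_S2[OF eE] es by simp
    show "y1 \<in> S2 - cell_boundary c1" "c1 = connected_component_set (S2 - cell_boundary c1) y1"
      using cell_comp[OF c1 y1] by auto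
    show "q \<in> S2 - cell_boundary c3" "c3 = connected_component_set (S2 - cell_boundary c3) q"
      using cell_comp[OF c3 q] by auto
    show "connected c2" using cell_basic(1)[OF c2] .
    show "c2 \<subseteq> S2 - cell_boundary c1 - cell_boundary c3"
      using cell_basic(3)[OF c2] cell_closure_disj[OF c1 c2 ne(1)] cell_closure_disj[OF c3 c2 ne(3)[symmetric]] cb
      by blast
    show "c3 \<inter> cell_boundary c1 = {}" using cell_closure_disj[OF c1 c3 ne(2)] cb by blast
    show "c1 \<inter> c3 = {}" "c1 \<inter> c2 = {}" "c2 \<inter> c3 = {}"
      using cell_disj c1 c2 c3 ne by auto
    show "g e (1/2) \<in> closure c2" using d2 ph cb by blast
    show "g e (1/2) \<in> closure c3" using d3(6) ph cb by blast
  qed (use d1 d3 es in auto)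
qed

end


lemma no_three_card:
  assumes "\<And>a b c. a \<in> X \<Longrightarrow> b \<in> X \<Longrightarrow> c \<in> X \<Longrightarrow> a \<noteq> b \<Longrightarrow> a \<noteq> c \<Longrightarrow> b \<noteq> c \<Longrightarrow> False"
  shows "finite X \<and> card X \<le> 2"
proof (rule ccontr)
  assume "\<not> (finite X \<and> card X \<le> 2)"
  then obtain T where T: "T \<subseteq> X" "card T = 3"
  proof (cases "finite X")
    case True
    then have "3 \<le> card X" using \<open>\<not> (finite X \<and> card X \<le> 2)\<close> by auto
    then show ?thesis using obtain_subset_with_card_n that by metis
  next
    case False
    then show ?thesis using infinite_arbitrarily_large that by metis
  qed
  then obtain a b c where "T = {a, b, c}" "a \<noteq> b" "b \<noteq> c" "a \<noteq> c" by (auto simp: card_3_iff)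
  then show False using assms T by auto
qed

theorem mainTheorem7:
  fixes V :: "(real^3) set" and E :: "'e set" and g :: "'e \<Rightarrow> real \<Rightarrow> real^3"
  assumes "connected_drawing V E g"
  shows "2 * card (uncrossed_edges V E g) \<ge>
           card {c \<in> cells V E g. is_U5 V E g c} + card {c \<in> cells V E g. is_U6 V E g c}"
proof -
  have dr: "drawing V E g" using assms by (simp add: connected_drawing_def)
  define U5 where "U5 = {c \<in> cells V E g. is_U5 V E g c}"
  define U6 where "U6 = {c \<in> cells V E g. is_U6 V E g c}"
  define W where "W = U5 \<union> U6"
  define E0 where "E0 = uncrossed_edges V E g"
  define P where "P = (\<lambda>c e B. arc B \<and> pathstart B = pathfinish (g e) \<and>
     pathfinish B = pathstart (g e) \<and> path_image B \<inter> edge_set g e \<subseteq> {pathstart (g e), pathfinish (g e)} \<and>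
     path_image B \<subseteq> S2 \<and> cell_boundary c = edge_set g e \<union> path_image B)"
  have data: "\<exists>e. e \<in> E0 \<and> (\<exists>B. P c e B)" if "c \<in> W" for c
    using cell_data[OF dr, of c] that by (auto simp: W_def U5_def U6_def E0_def P_def)
  define wit where "wit c = (SOME e. e \<in> E0 \<and> (\<exists>B. P c e B))" for c
  have wit: "wit c \<in> E0 \<and> (\<exists>B. P c (wit c) B)" if "c \<in> W" for c
    unfolding wit_def by (rule someI_ex[OF data[OF that]])
  have E0E: "E0 \<subseteq> E" by (auto simp: E0_def uncrossed_edges_def)
  have fE0: "finite E0" using E0E dr_V(3)[OF dr] finite_subset by auto
  have WC: "W \<subseteq> cells V E g" by (auto simp: W_def U5_def U6_def)
  define X where "X e = {c \<in> W. wit c = e}" for e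
  have Xs: "finite (X e) \<and> card (X e) \<le> 2" if eE0: "e \<in> E0" for e
  proof (rule no_three_card)
    fix c1 c2 c3 assume c: "c1 \<in> X e" "c2 \<in> X e" "c3 \<in> X e" "c1 \<noteq> c2" "c1 \<noteq> c3" "c2 \<noteq> c3"
    have cW: "c1 \<in> W" "c2 \<in> W" "c3 \<in> W" and we: "wit c1 = e" "wit c2 = e" "wit c3 = e"
      using c by (auto simp: X_def)
    obtain B1 where B1: "P c1 e B1" using wit[OF cW(1)] we by auto
    obtain B2 where B2: "P c2 e B2" using wit[OF cW(2)] we by auto
    obtain B3 where B3: "P c3 e B3" using wit[OF cW(3)] we by auto
    show False
      by (rule no_three[OF dr, of c1 c2 c3 B1 e B2 B3])
         (use WC cW c B1 B2 B3 eE0 E0E in \<open>auto simp: P_def\<close>)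
  qed
  have WU: "W \<subseteq> (\<Union>e\<in>E0. X e)" using wit by (auto simp: X_def)
  have fU: "finite (\<Union>e\<in>E0. X e)" using fE0 Xs by auto
  have fW: "finite W" using finite_subset[OF WU fU] .
  have "card W \<le> card (\<Union>e\<in>E0. X e)" using card_mono[OF fU WU] .
  also have "\<dots> \<le> (\<Sum>e\<in>E0. card (X e))" by (rule card_UN_le[OF fE0])
  also have "\<dots> \<le> (\<Sum>e\<in>E0. 2)" by (rule sum_mono) (use Xs in auto)
  also have "\<dots> = 2 * card E0" by simp
  finally have cW: "card W \<le> 2 * card E0" .
  have disj: "U5 \<inter> U6 = {}" using U5_U6_disj[OF dr] by (auto simp: U5_def U6_def)
  have "card W = card U5 + card U6"
    unfolding W_def by (rule card_Un_disjoint) (use fW disj in \<open>auto simp: W_def intro: finite_subset\<close>)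
  then show ?thesis using cW by (simp add: U5_def U6_def E0_def)
qed

end
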